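(* Consider the model in the context with $\bar e=0$. For $\mathcal U\subseteq\mathcal U_0$ and $\mathcal C\subseteq\mathcal C_0$ define $f(\mathcal U,\mathcal C)$ as follows: if $|\mathcal C|\ge K$, $f(\mathcal U,\mathcal C)=\max_R E(\mathcal U,\mathcal C,R)$, the maximum over all recommendations $R$ such that $(\mathcal U,\mathcal C)$ is a stable set with recommendation $R$ (undefined if no such $R$ exists); if $|\mathcal C|<K$, $f(\mathcal U,\mathcal C)$ is defined in the same way but in the modified instance where each user receives exactly $|\mathcal C|$ recommendations instead of $K$. Then for every $\mathcal U\subseteq\mathcal U_0$, all $c_0,c_1\in\mathcal C_0$ and every $\mathcal C\subseteq\mathcal C_0\setminus\{c_0,c_1\}$, $$f(\mathcal U,\mathcal C\cup\{c_0,c_1\})-f(\mathcal U,\mathcal C\cup\{c_1\})\le f(\mathcal U,\mathcal C\cup\{c_0\})-f(\mathcal U,\mathcal C),$$ whenever all four terms are well-defined. This holds for every value of $K$.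
   Context: An instance consists of a dimension $D\ge 1$, users $\mathcal U_0=\{1,\dots,U\}$ with types $u_i\in\mathbb R^D_{\ge0}$, creators $\mathcal C_0=\{1,\dots,C\}$ with types $c_j\in\mathbb R^D_{\ge 0}$, all types of Euclidean norm $1$, a positive integer $K$, a creator threshold $\bar a\in\mathbb N_0$ and a user threshold $\bar e\in[0,1]$. For $\mathcal U\subseteq\mathcal U_0$, $\mathcal C\subseteq\mathcal C_0$, a recommendation $R$ assigns to each $i\in\mathcal U$ a set $R(i)\subseteq\mathcal C$; its total engagement is $E(\mathcal U,\mathcal C,R)=\sum_{i\in\mathcal U}\sum_{j\in R(i)}u_i^Tc_j$. The pair $(\mathcal U,\mathcal C)$ is a stable set with recommendation $R$ if $|R(i)|=K$ and $u_i^Tc_j\ge\bar e$ for all $i\in\mathcal U$, $j\in R(i)$, and $|\{i\in\mathcal U: j\in R(i)\}|\ge\bar a$ for every $j\in\mathcal C$. *)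

theory Defs
  imports "HOL-Analysis.Analysis"
begin

text \<open>Types are vectors in real^'d (dimension D = CARD('d) >= 1).
  u i / c j are the types of user i / creator j.  Users are {1..nU}, creators {1..nC}.\<close>

definition valid_types :: "nat \<Rightarrow> (nat \<Rightarrow> real^'d) \<Rightarrow> bool" where
  "valid_types n v \<longleftrightarrow> (\<forall>i\<in>{1..n}. (\<forall>k. v i $ k \<ge> 0) \<and> norm (v i) = 1)"

definition engagement ::
  "(nat \<Rightarrow> real^'d) \<Rightarrow> (nat \<Rightarrow> real^'d) \<Rightarrow> nat set \<Rightarrow> (nat \<Rightarrow> nat set) \<Rightarrow> real" where
  "engagement u c Us R = (\<Sum>i\<in>Us. \<Sum>j\<in>R i. inner (u i) (c j))"

definition stable_with ::
  "(nat \<Rightarrow> real^'d) \<Rightarrow> (nat \<Rightarrow> real^'d) \<Rightarrow> nat \<Rightarrow> nat \<Rightarrow> real \<Rightarrow>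
   nat set \<Rightarrow> nat set \<Rightarrow> (nat \<Rightarrow> nat set) \<Rightarrow> bool" where
  "stable_with u c k a e Us Cs R \<longleftrightarrow>
     (\<forall>i\<in>Us. R i \<subseteq> Cs \<and> card (R i) = k \<and> (\<forall>j\<in>R i. inner (u i) (c j) \<ge> e)) \<and>
     (\<forall>j\<in>Cs. card {i\<in>Us. j \<in> R i} \<ge> a)"

text \<open>None encodes "undefined" (no stable recommendation exists).\<close>
definition fval ::
  "(nat \<Rightarrow> real^'d) \<Rightarrow> (nat \<Rightarrow> real^'d) \<Rightarrow> nat \<Rightarrow> nat \<Rightarrow>
   nat set \<Rightarrow> nat set \<Rightarrow> real option" where
  "fval u c K a Us Cs =
     (let k = (if card Cs \<ge> K then K else card Cs) in
      if (\<exists>R. stable_with u c k a 0 Us Cs R)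
      then Some (Max {engagement u c Us R | R. stable_with u c k a 0 Us Cs R})
      else None)"

end

theory Submission
  imports Defs
begin

lemma dcount:
  assumes "finite I" "finite J"
  shows "(\<Sum>j\<in>J. card {i\<in>I. j \<in> X i}) = (\<Sum>i\<in>I. card (X i \<inter> J))"
proof -
  have "(\<Sum>j\<in>J. card {i\<in>I. j \<in> X i}) = (\<Sum>j\<in>J. \<Sum>i\<in>{i\<in>I. j \<in> X i}. (1::nat))"
    by simp
  also have "\<dots> = (\<Sum>i\<in>I. \<Sum>j\<in>{j\<in>J. j \<in> X i}. (1::nat))"
    using sum.swap_restrict[OF assms(2) assms(1), of "\<lambda>_ _. (1::nat)" "\<lambda>j i. j \<in> X i"] by simp
  also have "\<dots> = (\<Sum>i\<in>I. card (X i \<inter> J))"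
    by (intro sum.cong) (auto intro: arg_cong[where f=card])
  finally show ?thesis .
qed

lemma relpow_avoid:
  "(x, y) \<in> (E::('a \<times> 'a) set) ^^ k \<Longrightarrow> (x, y) \<in> (E - F) ^^ k \<or>
     (\<exists>p q k1 k2. (p, q) \<in> F \<and> (p, q) \<in> E \<and> (x, p) \<in> E ^^ k1 \<and> (q, y) \<in> E ^^ k2 \<and> k1 + k2 + 1 = k)"
proof (induction k arbitrary: y)
  case 0
  then show ?case by auto
next
  case (Suc k)
  from Suc.prems obtain z where xz: "(x, z) \<in> E ^^ k" and zy: "(z, y) \<in> E"
    by (rule relpow_Suc_E)
  from Suc.IH[OF xz] show ?case
  proof
    assume cl: "(x, z) \<in> (E - F) ^^ k"
    show ?thesis
    proof (cases "(z, y) \<in> F")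
      case True
      have "(y, y) \<in> E ^^ 0" by (rule relpow_0_I)
      then have "(z, y) \<in> F \<and> (z, y) \<in> E \<and> (x, z) \<in> E ^^ k \<and> (y, y) \<in> E ^^ 0 \<and> k + 0 + 1 = Suc k"
        using True xz zy by simp
      then show ?thesis by blast
    next
      case False
      then show ?thesis using cl zy by (auto intro: relpow_Suc_I)
    qed
  next
    assume "\<exists>p q k1 k2. (p, q) \<in> F \<and> (p, q) \<in> E \<and> (x, p) \<in> E ^^ k1 \<and> (q, z) \<in> E ^^ k2 \<and> k1 + k2 + 1 = k"
    then obtain p q k1 k2 where "(p, q) \<in> F" "(p, q) \<in> E" "(x, p) \<in> E ^^ k1" "(q, z) \<in> E ^^ k2" "k1 + k2 + 1 = k"
      by blast
    then show ?thesis using zy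
      by (intro disjI2 exI[of _ p] exI[of _ q] exI[of _ k1] exI[of _ "Suc k2"]) (auto intro: relpow_Suc_I)
  qed
qed

lemma relpow_mono': "(A::('a \<times> 'a) set) \<subseteq> B \<Longrightarrow> (x, y) \<in> A ^^ k \<Longrightarrow> (x, y) \<in> B ^^ k"
proof (induction k arbitrary: y)
  case 0 then show ?case by (metis relpow_0_E relpow_0_I)
next
  case (Suc k)
  from Suc.prems(2) obtain z where "(x, z) \<in> A ^^ k" "(z, y) \<in> A" by (rule relpow_Suc_E)
  then show ?case using Suc by (auto intro: relpow_Suc_I)
qed

locale core =
  fixes I :: "'u set" and C :: "'c set" and D S :: "'u \<Rightarrow> 'c set" and m :: "'c \<Rightarrow> nat"
  assumes finI: "finite I" and finC: "finite C"
    and DC: "\<forall>i\<in>I. D i \<subseteq> C" and SD: "\<forall>i\<in>I. S i \<subseteq> D i"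
    and m_alpha: "\<forall>j\<in>C. m j \<le> card {i\<in>I. j \<in> S i}"
    and m_beta: "\<forall>j\<in>C. m j \<le> card {i\<in>I. j \<in> D i - S i}"
begin

definition tc where "tc T j = card {i\<in>I. j \<in> T i}"
definition uc where "uc T j = card {i\<in>I. j \<in> D i - T i}"
definition valid where "valid p T \<longleftrightarrow> (\<forall>i\<in>I. T i \<subseteq> D i \<and> card (T i) = p i)"
definition psi where "psi T j = (m j - tc T j) + (m j - uc T j)"
definition Psi where "Psi T = (\<Sum>j\<in>C. psi T j)"
definition rel where "rel T = {(x, y). \<exists>i\<in>I. x \<in> T i \<and> y \<in> D i - T i}"

lemma finD: "i \<in> I \<Longrightarrow> finite (D i)"
  using DC finC finite_subset by blast

lemma split_card:
  assumes "\<forall>i\<in>I. T i \<subseteq> D i"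
  shows "card {i\<in>I. j \<in> T i} + card {i\<in>I. j \<in> D i - T i} = card {i\<in>I. j \<in> D i}"
proof -
  have "{i\<in>I. j \<in> D i} = {i\<in>I. j \<in> T i} \<union> {i\<in>I. j \<in> D i - T i}" using assms by auto
  moreover have "finite {i\<in>I. j \<in> T i}" "finite {i\<in>I. j \<in> D i - T i}" using finI by auto
  ultimately show ?thesis by (simp add: card_Un_disjoint disjoint_iff)
qed

lemma tu_sum: "valid p T \<Longrightarrow> tc T j + uc T j = card {i\<in>I. j \<in> D i}"
  unfolding tc_def uc_def valid_def using split_card[of T] by blast

lemma two_m: "j \<in> C \<Longrightarrow> 2 * m j \<le> card {i\<in>I. j \<in> D i}"
  using split_card[of S j] SD m_alpha m_beta by fastforce

lemma sum2:
  assumes "a \<in> C" "b \<in> C" "a \<noteq> b"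
  shows "(\<Sum>j\<in>C. f j) = f a + f b + (\<Sum>j\<in>C - {a, b}. f j)"
proof -
  have "(\<Sum>j\<in>C. f j) = f a + (\<Sum>j\<in>C - {a}. f j)"
    using assms finC by (simp add: sum.remove)
  also have "(\<Sum>j\<in>C - {a}. f j) = f b + (\<Sum>j\<in>C - {a} - {b}. f j)"
    using assms finC by (subst sum.remove[of _ b]) auto
  finally show ?thesis by (simp add: Diff_insert2[symmetric] insert_commute add.assoc)
qed

lemma swap_lemma:
  assumes v: "valid p T" and i0: "i0 \<in> I" and a: "a \<in> T i0" and b: "b \<in> D i0 - T i0"
    and aC: "a \<in> C" and ua: "uc T a < m a"
  defines "T' \<equiv> T(i0 := insert b (T i0 - {a}))"
  shows "valid p T'" and "Psi T' \<le> Psi T" and "m b < uc T b \<Longrightarrow> Psi T' < Psi T"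
    and "\<not> m b < uc T b \<Longrightarrow> uc T' b < m b"
    and "\<And>j. j \<noteq> a \<Longrightarrow> j \<noteq> b \<Longrightarrow> uc T' j = uc T j"
    and "rel T - ({a} \<times> UNIV \<union> UNIV \<times> {b}) \<subseteq> rel T'"
proof -
  have ab: "a \<noteq> b" using a b by auto
  have TD: "T i0 \<subseteq> D i0" using v i0 unfolding valid_def by auto
  have finT: "finite (T i0)" using finD[OF i0] TD finite_subset by blast
  have "card (T i0) > 0" using finT a card_gt_0_iff by blast
  then show "valid p T'"
    using v i0 a b finT unfolding valid_def T'_def
    by (auto simp: card_insert_if)
  have bC: "b \<in> C" using b DC i0 by auto
  have tA: "{i\<in>I. a \<in> T' i} = {i\<in>I. a \<in> T i} - {i0}" using ab unfolding T'_def by auto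
  have uA: "{i\<in>I. a \<in> D i - T' i} = insert i0 {i\<in>I. a \<in> D i - T i}"
    using ab a TD i0 unfolding T'_def by auto
  have tB: "{i\<in>I. b \<in> T' i} = insert i0 {i\<in>I. b \<in> T i}" using i0 unfolding T'_def by auto
  have uB: "{i\<in>I. b \<in> D i - T' i} = {i\<in>I. b \<in> D i - T i} - {i0}" using ab unfolding T'_def by auto
  have ta: "tc T' a + 1 = tc T a" unfolding tc_def tA
    using card_Suc_Diff1[of "{i\<in>I. a \<in> T i}" i0] i0 a finI by simp
  have uaa: "uc T' a = uc T a + 1" unfolding uc_def uA using finI a by simp
  have tb: "tc T' b = tc T b + 1" unfolding tc_def tB using finI b by simp
  have ub: "uc T' b + 1 = uc T b" unfolding uc_def uB
    using card_Suc_Diff1[of "{i\<in>I. b \<in> D i - T i}" i0] i0 b finI by simp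
  have oth: "tc T' j = tc T j \<and> uc T' j = uc T j" if "j \<noteq> a" "j \<noteq> b" for j
  proof -
    have "{i\<in>I. j \<in> T' i} = {i\<in>I. j \<in> T i}" "{i\<in>I. j \<in> D i - T' i} = {i\<in>I. j \<in> D i - T i}"
      using that unfolding T'_def by auto
    then show ?thesis unfolding tc_def uc_def by simp
  qed
  then show "\<And>j. j \<noteq> a \<Longrightarrow> j \<noteq> b \<Longrightarrow> uc T' j = uc T j" by blast
  have sumT: "tc T a + uc T a = card {i\<in>I. a \<in> D i}" using tu_sum[OF v] .
  have tm: "2 * m a \<le> card {i\<in>I. a \<in> D i}" using two_m[OF aC] .
  have pa: "psi T' a + 1 = psi T a" unfolding psi_def using ta uaa ua sumT tm by arith
  have pb: "psi T' b \<le> psi T b + 1" unfolding psi_def using tb ub by arith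
  have pb2: "m b < uc T b \<Longrightarrow> psi T' b \<le> psi T b" unfolding psi_def using tb ub by arith
  have rest: "(\<Sum>j\<in>C - {a, b}. psi T' j) = (\<Sum>j\<in>C - {a, b}. psi T j)"
    by (rule sum.cong) (auto simp: psi_def oth)
  have PT: "Psi T = psi T a + psi T b + (\<Sum>j\<in>C - {a, b}. psi T j)"
    unfolding Psi_def using sum2[OF aC bC ab] .
  have PT': "Psi T' = psi T' a + psi T' b + (\<Sum>j\<in>C - {a, b}. psi T' j)"
    unfolding Psi_def using sum2[OF aC bC ab] .
  show "Psi T' \<le> Psi T" using PT PT' rest pa pb by linarith
  show "m b < uc T b \<Longrightarrow> Psi T' < Psi T" using PT PT' rest pa pb2 by linarith
  show "\<not> m b < uc T b \<Longrightarrow> uc T' b < m b" using ub by linarith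
  show "rel T - ({a} \<times> UNIV \<union> UNIV \<times> {b}) \<subseteq> rel T'"
    unfolding rel_def T'_def by auto
qed

lemma improve:
  "valid p T \<Longrightarrow> a \<in> C \<Longrightarrow> uc T a < m a \<Longrightarrow> m g < uc T g \<Longrightarrow> (a, g) \<in> (rel T) ^^ n
   \<Longrightarrow> \<exists>T'. valid p T' \<and> Psi T' < Psi T"
proof (induction n arbitrary: T a g rule: less_induct)
  case (less n)
  define Q where "Q k \<longleftrightarrow> (\<exists>g. m g < uc T g \<and> (a, g) \<in> (rel T) ^^ k)" for k
  define n0 where "n0 = (LEAST k. Q k)"
  have Qn: "Q n" unfolding Q_def using less.prems by blast
  have n0n: "n0 \<le> n" unfolding n0_def using Qn by (rule Least_le)
  have Qn0: "Q n0" unfolding n0_def using Qn by (rule LeastI)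
  then obtain g0 where g0: "m g0 < uc T g0" "(a, g0) \<in> (rel T) ^^ n0" unfolding Q_def by blast
  have min: "\<not> Q k" if "k < n0" for k using that unfolding n0_def by (rule not_less_Least)
  have "n0 \<noteq> 0"
  proof
    assume "n0 = 0" then have "a = g0" using g0 by simp
    then show False using g0 less.prems(3) by simp
  qed
  then obtain k where n0k: "n0 = Suc k" by (cases n0) auto
  from relpow_Suc_D2[OF g0(2)[unfolded n0k]] obtain b where ab: "(a, b) \<in> rel T" and bg: "(b, g0) \<in> (rel T) ^^ k"
    by blast
  from ab obtain i0 where i0: "i0 \<in> I" "a \<in> T i0" "b \<in> D i0 - T i0" unfolding rel_def by blast
  define T' where "T' = T(i0 := insert b (T i0 - {a}))"
  note sw = swap_lemma[OF less.prems(1) i0 less.prems(2,3), folded T'_def]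
  show ?case
  proof (cases "m b < uc T b")
    case True
    then show ?thesis using sw(1) sw(3)[OF True] by blast
  next
    case False
    have g0a: "g0 \<noteq> a" using g0(1) less.prems(3) by (metis less_asym)
    have g0b: "g0 \<noteq> b" using g0(1) False by metis
    have bC: "b \<in> C" using i0 DC by blast
    have ug: "m g0 < uc T' g0" using sw(5)[OF g0a g0b] g0 by simp
    let ?F = "{a} \<times> UNIV \<union> UNIV \<times> {b}"
    have "(b, g0) \<in> (rel T - ?F) ^^ k"
    proof -
      from relpow_avoid[OF bg, of ?F] show ?thesis
      proof
        assume "\<exists>p q k1 k2. (p, q) \<in> ?F \<and> (p, q) \<in> rel T \<and> (b, p) \<in> rel T ^^ k1 \<and> (q, g0) \<in> rel T ^^ k2 \<and> k1 + k2 + 1 = k"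
        then obtain p q k1 k2 where pq: "(p, q) \<in> ?F" "(p, q) \<in> rel T" "(b, p) \<in> rel T ^^ k1"
          "(q, g0) \<in> rel T ^^ k2" "k1 + k2 + 1 = k" by blast
        from pq(1) have False
        proof
          assume "(p, q) \<in> {a} \<times> UNIV"
          then have "p = a" by auto
          then have "(a, q) \<in> rel T" using pq(2) by simp
          then have "(a, g0) \<in> rel T ^^ (Suc k2)" using pq(4) by (rule relpow_Suc_I2)
          then have "Q (Suc k2)" unfolding Q_def using g0 by blast
          moreover have "Suc k2 < n0" using pq(5) n0k by simp
          ultimately show False using min by blast
        next
          assume "(p, q) \<in> UNIV \<times> {b}"
          then have "q = b" by auto
          then have "(b, g0) \<in> rel T ^^ k2" using pq(4) by simp
          with ab have "(a, g0) \<in> rel T ^^ (Suc k2)" by (rule relpow_Suc_I2)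
          then have "Q (Suc k2)" unfolding Q_def using g0 by blast
          moreover have "Suc k2 < n0" using pq(5) n0k by simp
          ultimately show False using min by blast
        qed
        then show ?thesis ..
      qed
    qed
    then have bg': "(b, g0) \<in> rel T' ^^ k" using relpow_mono'[OF sw(6)] by blast
    have "k < n" using n0k n0n by simp
    from less.IH[OF this sw(1) bC sw(4)[OF False] ug bg'] obtain T'' where
      "valid p T''" "Psi T'' < Psi T'" by blast
    then show ?thesis using sw(2) by (intro exI[of _ T'']) simp
  qed
qed


lemma reach:
  assumes v: "valid p T" and cond: "\<forall>i\<in>I. card (S i) + p i \<le> card (D i)"
    and aC: "a \<in> C" and ua: "uc T a < m a"
  shows "\<exists>g. m g < uc T g \<and> (a, g) \<in> (rel T)\<^sup>*"
proof (rule ccontr)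
  assume neg: "\<not> ?thesis"
  define J where "J = {j\<in>C. (a, j) \<in> (rel T)\<^sup>*}"
  have finJ: "finite J" unfolding J_def using finC by simp
  have aJ: "a \<in> J" unfolding J_def using aC by simp
  have le: "\<forall>j\<in>J. uc T j \<le> m j" using neg unfolding J_def by (auto simp: not_less)
  have lt: "(\<Sum>j\<in>J. uc T j) < (\<Sum>j\<in>J. card {i\<in>I. j \<in> S i})"
  proof (rule sum_strict_mono_ex1[OF finJ])
    show "\<forall>x\<in>J. uc T x \<le> card {i\<in>I. x \<in> S i}"
      using le m_alpha unfolding J_def by (auto intro: order_trans)
    show "\<exists>a\<in>J. uc T a < card {i\<in>I. a \<in> S i}"
      using aJ ua m_alpha aC by (intro bexI[of _ a]) (auto intro: less_le_trans)
  qed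
  have e1: "(\<Sum>j\<in>J. uc T j) = (\<Sum>i\<in>I. card ((D i - T i) \<inter> J))"
    unfolding uc_def using dcount[OF finI finJ, of "\<lambda>i. D i - T i"] .
  have e2: "(\<Sum>j\<in>J. card {i\<in>I. j \<in> S i}) = (\<Sum>i\<in>I. card (S i \<inter> J))"
    using dcount[OF finI finJ, of S] .
  have per: "card (S i \<inter> J) \<le> card ((D i - T i) \<inter> J)" if i: "i \<in> I" for i
  proof (cases "T i \<inter> J = {}")
    case True
    have "S i \<inter> J \<subseteq> (D i - T i) \<inter> J" using True SD i by auto
    then show ?thesis using finD[OF i] by (intro card_mono) auto
  next
    case False
    then obtain x where x: "x \<in> T i" "x \<in> J" by blast
    have TD: "T i \<subseteq> D i" and cT: "card (T i) = p i" using v i unfolding valid_def by auto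
    have "D i - T i \<subseteq> J"
    proof
      fix y assume y: "y \<in> D i - T i"
      then have "(x, y) \<in> rel T" unfolding rel_def using x i by blast
      moreover have "(a, x) \<in> (rel T)\<^sup>*" using x unfolding J_def by simp
      ultimately have "(a, y) \<in> (rel T)\<^sup>*" by simp
      moreover have "y \<in> C" using y DC i by auto
      ultimately show "y \<in> J" unfolding J_def by simp
    qed
    then have "card ((D i - T i) \<inter> J) = card (D i - T i)" by (simp add: Int_absorb2)
    moreover have "card (D i - T i) = card (D i) - p i"
      using TD cT finD[OF i] by (simp add: card_Diff_subset finite_subset)
    moreover have "card (S i \<inter> J) \<le> card (S i)"
      using SD i finD[OF i] by (intro card_mono) (auto intro: finite_subset)
    moreover have "card (S i) + p i \<le> card (D i)" using cond i by blast
    ultimately show ?thesis by linarith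
  qed
  have "(\<Sum>i\<in>I. card (S i \<inter> J)) \<le> (\<Sum>i\<in>I. card ((D i - T i) \<inter> J))"
    using per by (intro sum_mono) auto
  then show False using lt e1 e2 by simp
qed

lemma step_u:
  assumes "valid p T" "\<forall>i\<in>I. card (S i) + p i \<le> card (D i)" "a \<in> C" "uc T a < m a"
  shows "\<exists>T'. valid p T' \<and> Psi T' < Psi T"
proof -
  from reach[OF assms] obtain g where g: "m g < uc T g" "(a, g) \<in> (rel T)\<^sup>*" by blast
  from rtrancl_imp_relpow[OF g(2)] obtain n where "(a, g) \<in> rel T ^^ n" by blast
  from improve[OF assms(1,3,4) g(1) this] show ?thesis .
qed

lemma compl:
  assumes v: "valid p T"
  shows "valid (\<lambda>i. card (D i) - p i) (\<lambda>i. D i - T i)"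
    and "tc (\<lambda>i. D i - T i) j = uc T j" and "uc (\<lambda>i. D i - T i) j = tc T j"
    and "Psi (\<lambda>i. D i - T i) = Psi T"
proof -
  show "valid (\<lambda>i. card (D i) - p i) (\<lambda>i. D i - T i)"
    using v finD unfolding valid_def by (auto simp: card_Diff_subset finite_subset)
  show tc': "tc (\<lambda>i. D i - T i) j = uc T j" for j unfolding tc_def uc_def by simp
  have "{i\<in>I. j \<in> D i - (D i - T i)} = {i\<in>I. j \<in> T i}" for j using v unfolding valid_def by auto
  then show uc': "uc (\<lambda>i. D i - T i) j = tc T j" for j unfolding tc_def uc_def by simp
  show "Psi (\<lambda>i. D i - T i) = Psi T" unfolding Psi_def psi_def tc' uc' by (simp add: add.commute)
qed

lemma step:
  assumes v: "valid p T" and cond: "\<forall>i\<in>I. card (S i) \<le> p i \<and> card (S i) + p i \<le> card (D i)"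
    and pos: "0 < Psi T"
  shows "\<exists>T'. valid p T' \<and> Psi T' < Psi T"
proof -
  from pos obtain j where j: "j \<in> C" "0 < psi T j" unfolding Psi_def
    by (metis not_gr_zero sum.neutral)
  then have "tc T j < m j \<or> uc T j < m j" unfolding psi_def by arith
  then show ?thesis
  proof
    assume "uc T j < m j"
    then show ?thesis using step_u[OF v _ j(1)] cond by blast
  next
    assume tj: "tc T j < m j"
    let ?T2 = "\<lambda>i. D i - T i" and ?p2 = "\<lambda>i. card (D i) - p i"
    have c2: "\<forall>i\<in>I. card (S i) + ?p2 i \<le> card (D i)" using cond by auto
    from step_u[OF compl(1)[OF v] c2 j(1)] tj compl(3)[OF v] obtain T3 where
      T3: "valid ?p2 T3" "Psi T3 < Psi ?T2" by auto
    have "valid (\<lambda>i. card (D i) - ?p2 i) (\<lambda>i. D i - T3 i)" using compl(1)[OF T3(1)] .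
    moreover have "\<forall>i\<in>I. card (D i) - ?p2 i = p i" using cond by auto
    ultimately have "valid p (\<lambda>i. D i - T3 i)" unfolding valid_def by simp
    moreover have "Psi (\<lambda>i. D i - T3 i) < Psi T" using compl(4)[OF T3(1)] compl(4)[OF v] T3(2) by simp
    ultimately show ?thesis by blast
  qed
qed

theorem exists_good:
  assumes cond: "\<forall>i\<in>I. card (S i) \<le> p i \<and> card (S i) + p i \<le> card (D i)"
  shows "\<exists>T. (\<forall>i\<in>I. T i \<subseteq> D i \<and> card (T i) = p i) \<and>
    (\<forall>j\<in>C. m j \<le> card {i\<in>I. j \<in> T i} \<and> m j \<le> card {i\<in>I. j \<in> D i - T i})"
proof -
  have "\<forall>i\<in>I. \<exists>X. X \<subseteq> D i \<and> card X = p i"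
  proof
    fix i assume "i \<in> I"
    then have "p i \<le> card (D i)" using cond by auto
    then show "\<exists>X. X \<subseteq> D i \<and> card X = p i" by (meson obtain_subset_with_card_n)
  qed
  then obtain T0 where T0: "\<forall>i\<in>I. T0 i \<subseteq> D i \<and> card (T0 i) = p i" by metis
  have v0: "valid p T0" unfolding valid_def using T0 by blast
  have "\<forall>T. valid p T \<longrightarrow> Psi T = n \<longrightarrow> (\<exists>T'. valid p T' \<and> Psi T' = 0)" for n
  proof (induction n rule: less_induct)
    case (less n)
    show ?case
    proof (intro allI impI)
      fix T assume vT: "valid p T" and Pn: "Psi T = n"
      show "\<exists>T'. valid p T' \<and> Psi T' = 0"
      proof (cases "Psi T = 0")
        case True then show ?thesis using vT by blast
      next
        case False
        then obtain T' where "valid p T'" "Psi T' < Psi T" using step[OF vT cond] by auto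
        then show ?thesis using less.IH Pn by blast
      qed
    qed
  qed
  then obtain T where vT: "valid p T" and P0: "Psi T = 0" using v0 by blast
  have "\<forall>j\<in>C. psi T j = 0" using P0 finC unfolding Psi_def by simp
  then show ?thesis using vT unfolding valid_def psi_def tc_def uc_def by (intro exI[of _ T]) auto
qed

end


lemma inner_nonneg_vec:
  fixes x y :: "real^'d"
  assumes "\<forall>k. x $ k \<ge> 0" "\<forall>k. y $ k \<ge> 0"
  shows "inner x y \<ge> 0"
  unfolding inner_vec_def inner_real_def using assms by (simp add: sum_nonneg)

lemma card_split:
  assumes "finite I"
  shows "card {i\<in>I. P i} = card {i\<in>I. P i \<and> Q i} + card {i\<in>I. P i \<and> \<not> Q i}"
proof -
  have eq: "{i\<in>I. P i} = {i\<in>I. P i \<and> Q i} \<union> {i\<in>I. P i \<and> \<not> Q i}" by auto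
  show ?thesis by (subst eq, rule card_Un_disjoint) (use assms in auto)
qed

lemma fval_props:
  assumes fU: "finite Us" and fX: "finite X" and fv: "fval u c K a Us X = Some v"
  shows "\<exists>R. stable_with u c (if K \<le> card X then K else card X) a 0 Us X R \<and> engagement u c Us R = v"
    and "\<forall>R. stable_with u c (if K \<le> card X then K else card X) a 0 Us X R \<longrightarrow> engagement u c Us R \<le> v"
proof -
  let ?k = "if K \<le> card X then K else card X"
  let ?F = "{engagement u c Us R | R. stable_with u c ?k a 0 Us X R}"
  have fe: "fval u c K a Us X = (if \<exists>R. stable_with u c ?k a 0 Us X R then Some (Max ?F) else None)"
    unfolding fval_def Let_def by simp
  have ex: "\<exists>R. stable_with u c ?k a 0 Us X R"
  proof (rule ccontr)
    assume "\<not> ?thesis" then have "fval u c K a Us X = None" using fe by simp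
    then show False using fv by simp
  qed
  have "fval u c K a Us X = Some (Max ?F)" using fe ex by simp
  then have vM: "v = Max ?F" using fv by simp
  have sub: "?F \<subseteq> (\<lambda>R. engagement u c Us R) ` (Us \<rightarrow>\<^sub>E Pow X)"
  proof
    fix e assume "e \<in> ?F"
    then obtain R where R: "stable_with u c ?k a 0 Us X R" "e = engagement u c Us R"
      unfolding mem_Collect_eq by (elim exE conjE) simp
    have "\<forall>i\<in>Us. R i \<subseteq> X" using R(1) unfolding stable_with_def by simp
    then have r: "restrict R Us \<in> Us \<rightarrow>\<^sub>E Pow X" by (simp add: restrict_PiE_iff)
    have r2: "e = engagement u c Us (restrict R Us)"
      unfolding R(2) engagement_def by (intro sum.cong) auto
    show "e \<in> (\<lambda>R. engagement u c Us R) ` (Us \<rightarrow>\<^sub>E Pow X)"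
      by (rule image_eqI[where x="restrict R Us" and f="engagement u c Us", OF r2 r])
  qed
  have "finite (Us \<rightarrow>\<^sub>E Pow X)" using fU fX by (simp add: finite_PiE)
  then have finF: "finite ?F" by (rule finite_subset[OF sub finite_imageI])
  have mem: "engagement u c Us R \<in> ?F" if "stable_with u c ?k a 0 Us X R" for R
    unfolding mem_Collect_eq by (rule exI[of _ R]) (simp add: that)
  from ex obtain R0 where "stable_with u c ?k a 0 Us X R0" by blast
  then have neF: "?F \<noteq> {}" using mem by blast
  have "Max ?F \<in> ?F" using Max_in[OF finF neF] .
  then obtain R where "stable_with u c ?k a 0 Us X R" "engagement u c Us R = Max ?F"
    unfolding mem_Collect_eq by (elim exE conjE) simp
  then show "\<exists>R. stable_with u c ?k a 0 Us X R \<and> engagement u c Us R = v"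
    using vM by blast
  show "\<forall>R. stable_with u c ?k a 0 Us X R \<longrightarrow> engagement u c Us R \<le> v"
  proof (intro allI impI)
    fix R assume "stable_with u c ?k a 0 Us X R"
    then have "engagement u c Us R \<in> ?F" by (rule mem)
    then show "engagement u c Us R \<le> v" unfolding vM by (rule Max_ge[OF finF])
  qed
qed

lemma sum_indic:
  assumes "finite W" "X \<subseteq> W"
  shows "sum f X = (\<Sum>j\<in>W. if j \<in> X then f j else 0)"
proof -
  have "sum f X = sum f (W \<inter> X)" using assms by (simp add: Int_absorb1)
  also have "\<dots> = (\<Sum>j\<in>W. if j \<in> X then f j else 0)" using sum.inter_restrict[OF assms(1)] .
  finally show ?thesis .
qed


lemma main_case:
  fixes u c :: "nat \<Rightarrow> real^'d"
  assumes fU: "finite Us" and fC: "finite Cs" and c0C: "c0 \<notin> Cs" and c1C: "c1 \<notin> Cs"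
    and c01: "c0 \<noteq> c1"
    and wnn: "\<forall>i\<in>Us. \<forall>j\<in>Cs \<union> {c0, c1}. 0 \<le> inner (u i) (c j)"
    and stA: "stable_with u c K a 0 Us (Cs \<union> {c0, c1}) A"
    and stB: "stable_with u c K a 0 Us Cs B"
  shows "\<exists>P Q. stable_with u c K a 0 Us (Cs \<union> {c0}) P \<and> stable_with u c K a 0 Us (Cs \<union> {c1}) Q \<and>
    engagement u c Us P + engagement u c Us Q = engagement u c Us A + engagement u c Us B"
proof -
  let ?W = "Cs \<union> {c0, c1}"
  have fW: "finite ?W" using fC by simp
  have hA: "\<And>i. i \<in> Us \<Longrightarrow> A i \<subseteq> ?W \<and> card (A i) = K"
    using stA unfolding stable_with_def by blast
  have hAc: "\<And>j. j \<in> ?W \<Longrightarrow> a \<le> card {i\<in>Us. j \<in> A i}"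
    using stA unfolding stable_with_def by blast
  have hB: "\<And>i. i \<in> Us \<Longrightarrow> B i \<subseteq> Cs \<and> card (B i) = K"
    using stB unfolding stable_with_def by blast
  have hBc: "\<And>j. j \<in> Cs \<Longrightarrow> a \<le> card {i\<in>Us. j \<in> B i}"
    using stB unfolding stable_with_def by blast
  have finA: "finite (A i)" if "i \<in> Us" for i using hA[OF that] fW finite_subset by blast
  have finB: "finite (B i)" if "i \<in> Us" for i using hB[OF that] fC finite_subset by blast
  define S where "S i = (A i - B i) \<inter> Cs" for i
  define D where "D i = S i \<union> (B i - A i)" for i
  define sc where "sc j = card {i\<in>Us. j \<in> A i \<and> j \<in> B i}" for j
  define mm where "mm j = a - sc j" for j
  define x where "x i = card (A i \<inter> {c0})" for i
  define y where "y i = card (A i \<inter> {c1})" for i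
  define p where "p i = card (S i) + y i" for i
  have c0B: "c0 \<notin> B i" "c1 \<notin> B i" if "i \<in> Us" for i using hB[OF that] c0C c1C by auto
  have nums: "card (A i - B i) = card (S i) + x i + y i" "card (B i - A i) = card (A i - B i)"
    "card (D i) = card (S i) + card (B i - A i)" "card (A i) = card (A i \<inter> B i) + card (A i - B i)"
    if i: "i \<in> Us" for i
  proof -
    have e1: "A i - B i = (S i \<union> (A i \<inter> {c0})) \<union> (A i \<inter> {c1})"
      using hA[OF i] c0B[OF i] unfolding S_def by auto
    have "card (S i \<union> (A i \<inter> {c0})) = card (S i) + x i"
      unfolding x_def by (rule card_Un_disjoint) (use finA[OF i] c0C in \<open>auto simp: S_def\<close>)
    moreover have "card ((S i \<union> (A i \<inter> {c0})) \<union> (A i \<inter> {c1})) = card (S i \<union> (A i \<inter> {c0})) + y i"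
      unfolding y_def by (rule card_Un_disjoint) (use finA[OF i] c1C c01 in \<open>auto simp: S_def\<close>)
    ultimately show "card (A i - B i) = card (S i) + x i + y i" using e1 by simp
    have "card (A i - B i) = card (A i) - card (A i \<inter> B i)"
      using finA[OF i] by (simp add: card_Diff_subset_Int)
    moreover have "card (B i - A i) = card (B i) - card (B i \<inter> A i)"
      using finB[OF i] by (simp add: card_Diff_subset_Int)
    ultimately show "card (B i - A i) = card (A i - B i)" using hA[OF i] hB[OF i] by (simp add: Int_commute)
    show "card (D i) = card (S i) + card (B i - A i)"
      unfolding D_def by (rule card_Un_disjoint) (use finA[OF i] finB[OF i] in \<open>auto simp: S_def\<close>)
    have "A i = (A i \<inter> B i) \<union> (A i - B i)" by auto
    then show "card (A i) = card (A i \<inter> B i) + card (A i - B i)"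
      by (metis card_Un_disjoint finA[OF i] Diff_disjoint Int_Diff inf_sup_aci(1) finite_Diff finite_Int)
  qed
  have core_inst: "core Us Cs D S mm"
  proof (unfold core_def, intro conjI ballI)
    show "finite Us" "finite Cs" by (fact fU) (fact fC)
    show "D i \<subseteq> Cs" if "i \<in> Us" for i using hB[OF that] unfolding D_def S_def by auto
    show "S i \<subseteq> D i" for i unfolding D_def by auto
    fix j assume j: "j \<in> Cs"
    have "card {i\<in>Us. j \<in> A i} = card {i\<in>Us. j \<in> A i \<and> j \<in> B i} + card {i\<in>Us. j \<in> A i \<and> \<not> j \<in> B i}"
      by (rule card_split[OF fU])
    moreover have "{i\<in>Us. j \<in> A i \<and> \<not> j \<in> B i} = {i\<in>Us. j \<in> S i}" using j unfolding S_def by auto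
    ultimately show "mm j \<le> card {i\<in>Us. j \<in> S i}" using hAc[of j] j unfolding mm_def sc_def by simp
    have "card {i\<in>Us. j \<in> B i} = card {i\<in>Us. j \<in> B i \<and> j \<in> A i} + card {i\<in>Us. j \<in> B i \<and> \<not> j \<in> A i}"
      by (rule card_split[OF fU])
    moreover have "{i\<in>Us. j \<in> B i \<and> \<not> j \<in> A i} = {i\<in>Us. j \<in> D i - S i}" unfolding D_def S_def by auto
    moreover have "{i\<in>Us. j \<in> B i \<and> j \<in> A i} = {i\<in>Us. j \<in> A i \<and> j \<in> B i}" by auto
    ultimately show "mm j \<le> card {i\<in>Us. j \<in> D i - S i}" using hBc[OF j] unfolding mm_def sc_def by simp
  qed
  have cond: "\<forall>i\<in>Us. card (S i) \<le> p i \<and> card (S i) + p i \<le> card (D i)"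
    using nums unfolding p_def by fastforce
  obtain T where T: "\<forall>i\<in>Us. T i \<subseteq> D i \<and> card (T i) = p i"
    and Tc: "\<forall>j\<in>Cs. mm j \<le> card {i\<in>Us. j \<in> T i} \<and> mm j \<le> card {i\<in>Us. j \<in> D i - T i}"
    using core.exists_good[OF core_inst cond] by blast
  define P where "P i = (A i \<inter> B i) \<union> T i \<union> (A i \<inter> {c0})" for i
  define Q where "Q i = (A i \<inter> B i) \<union> (D i - T i) \<union> (A i \<inter> {c1})" for i
  have DC: "D i \<subseteq> Cs" if "i \<in> Us" for i using hB[OF that] unfolding D_def S_def by auto
  have DAB: "D i \<inter> (A i \<inter> B i) = {}" for i unfolding D_def S_def by auto
  have finD: "finite (D i)" if "i \<in> Us" for i using DC[OF that] fC finite_subset by blast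
  have finT: "finite (T i)" if "i \<in> Us" for i using T finD[OF that] that finite_subset by blast
  have cardP: "card (P i) = K" if i: "i \<in> Us" for i
  proof -
    have "card ((A i \<inter> B i) \<union> T i) = card (A i \<inter> B i) + card (T i)"
      by (rule card_Un_disjoint) (use finA[OF i] finT[OF i] T i DAB in auto)
    moreover have "card ((A i \<inter> B i) \<union> T i \<union> (A i \<inter> {c0})) = card ((A i \<inter> B i) \<union> T i) + x i"
      unfolding x_def by (rule card_Un_disjoint) (use finA[OF i] finT[OF i] T i DC[OF i] c0C c0B[OF i] in auto)
    ultimately show ?thesis unfolding P_def using T i nums[OF i] hA[OF i] unfolding p_def by simp
  qed
  have cardQ: "card (Q i) = K" if i: "i \<in> Us" for i
  proof -
    have TD: "T i \<subseteq> D i" "card (T i) = p i" using T i by auto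
    have cDT: "card (D i - T i) = card (D i) - p i" using card_Diff_subset[OF finT[OF i] TD(1)] TD(2) by simp
    have "card ((A i \<inter> B i) \<union> (D i - T i)) = card (A i \<inter> B i) + card (D i - T i)"
      by (rule card_Un_disjoint) (use finA[OF i] finD[OF i] DAB in auto)
    moreover have "card ((A i \<inter> B i) \<union> (D i - T i) \<union> (A i \<inter> {c1})) = card ((A i \<inter> B i) \<union> (D i - T i)) + y i"
      unfolding y_def by (rule card_Un_disjoint) (use finA[OF i] finD[OF i] DC[OF i] c1C c0B[OF i] in auto)
    ultimately show ?thesis unfolding Q_def using cDT i nums[OF i] hA[OF i] unfolding p_def by simp
  qed
  have stP: "stable_with u c K a 0 Us (Cs \<union> {c0}) P"
    unfolding stable_with_def
  proof (intro conjI ballI)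
    fix i assume i: "i \<in> Us"
    show "P i \<subseteq> Cs \<union> {c0}" unfolding P_def using T i DC[OF i] hB[OF i] by auto
    show "card (P i) = K" using cardP[OF i] .
    fix j assume "j \<in> P i"
    then have "j \<in> ?W" unfolding P_def using T i DC[OF i] hB[OF i] by auto
    then show "0 \<le> inner (u i) (c j)" using wnn i by blast
  next
    fix j assume j: "j \<in> Cs \<union> {c0}"
    show "a \<le> card {i\<in>Us. j \<in> P i}"
    proof (cases "j = c0")
      case True
      have "{i\<in>Us. j \<in> P i} = {i\<in>Us. j \<in> A i}"
        unfolding P_def using True T DC c0C c0B by auto
      then show ?thesis using hAc[of j] True by simp
    next
      case False
      then have jC: "j \<in> Cs" using j by simp
      have "card {i\<in>Us. j \<in> P i} = card {i\<in>Us. j \<in> P i \<and> (j \<in> A i \<and> j \<in> B i)} + card {i\<in>Us. j \<in> P i \<and> \<not> (j \<in> A i \<and> j \<in> B i)}"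
        by (rule card_split[OF fU])
      moreover have "{i\<in>Us. j \<in> P i \<and> (j \<in> A i \<and> j \<in> B i)} = {i\<in>Us. j \<in> A i \<and> j \<in> B i}"
        unfolding P_def by auto
      moreover have "{i\<in>Us. j \<in> P i \<and> \<not> (j \<in> A i \<and> j \<in> B i)} = {i\<in>Us. j \<in> T i}"
        unfolding P_def using False T DAB by auto
      ultimately show ?thesis using Tc jC unfolding mm_def sc_def by fastforce
    qed
  qed
  have stQ: "stable_with u c K a 0 Us (Cs \<union> {c1}) Q"
    unfolding stable_with_def
  proof (intro conjI ballI)
    fix i assume i: "i \<in> Us"
    show "Q i \<subseteq> Cs \<union> {c1}" unfolding Q_def using T i DC[OF i] hB[OF i] by auto
    show "card (Q i) = K" using cardQ[OF i] .
    fix j assume "j \<in> Q i"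
    then have "j \<in> ?W" unfolding Q_def using T i DC[OF i] hB[OF i] by auto
    then show "0 \<le> inner (u i) (c j)" using wnn i by blast
  next
    fix j assume j: "j \<in> Cs \<union> {c1}"
    show "a \<le> card {i\<in>Us. j \<in> Q i}"
    proof (cases "j = c1")
      case True
      have "{i\<in>Us. j \<in> Q i} = {i\<in>Us. j \<in> A i}"
        unfolding Q_def using True T DC c1C c0B by auto
      then show ?thesis using hAc[of j] True by simp
    next
      case False
      then have jC: "j \<in> Cs" using j by simp
      have "card {i\<in>Us. j \<in> Q i} = card {i\<in>Us. j \<in> Q i \<and> (j \<in> A i \<and> j \<in> B i)} + card {i\<in>Us. j \<in> Q i \<and> \<not> (j \<in> A i \<and> j \<in> B i)}"
        by (rule card_split[OF fU])
      moreover have "{i\<in>Us. j \<in> Q i \<and> (j \<in> A i \<and> j \<in> B i)} = {i\<in>Us. j \<in> A i \<and> j \<in> B i}"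
        unfolding Q_def by auto
      moreover have "{i\<in>Us. j \<in> Q i \<and> \<not> (j \<in> A i \<and> j \<in> B i)} = {i\<in>Us. j \<in> D i - T i}"
        unfolding Q_def using False DAB by auto
      ultimately show ?thesis using Tc jC unfolding mm_def sc_def by fastforce
    qed
  qed
  have per: "(\<Sum>j\<in>P i. inner (u i) (c j)) + (\<Sum>j\<in>Q i. inner (u i) (c j))
      = (\<Sum>j\<in>A i. inner (u i) (c j)) + (\<Sum>j\<in>B i. inner (u i) (c j))" if i: "i \<in> Us" for i
  proof -
    let ?f = "\<lambda>j. inner (u i) (c j)"
    have sP: "P i \<subseteq> ?W" and sQ: "Q i \<subseteq> ?W" unfolding P_def Q_def using T i DC[OF i] hB[OF i] by auto
    have sA: "A i \<subseteq> ?W" and sB: "B i \<subseteq> ?W" using hA[OF i] hB[OF i] by auto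
    have pt: "(if j \<in> P i then ?f j else 0) + (if j \<in> Q i then ?f j else 0)
        = (if j \<in> A i then ?f j else 0) + (if j \<in> B i then ?f j else 0)" if "j \<in> ?W" for j
    proof -
      have TD: "T i \<subseteq> D i" using T i by blast
      have "(j \<in> P i \<longleftrightarrow> (j \<in> A i \<and> j \<in> B i) \<or> j \<in> T i \<or> (j \<in> A i \<and> j = c0))"
        "(j \<in> Q i \<longleftrightarrow> (j \<in> A i \<and> j \<in> B i) \<or> (j \<in> D i \<and> j \<notin> T i) \<or> (j \<in> A i \<and> j = c1))"
        unfolding P_def Q_def by auto
      moreover have "j \<in> D i \<longleftrightarrow> (j \<in> A i \<and> j \<notin> B i \<and> j \<in> Cs) \<or> (j \<in> B i \<and> j \<notin> A i)"
        unfolding D_def S_def by auto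
      ultimately show ?thesis using TD c0C c1C c01 c0B[OF i] that
        by (cases "j \<in> T i"; cases "j \<in> A i"; cases "j \<in> B i") auto
    qed
    have "(\<Sum>j\<in>P i. ?f j) + (\<Sum>j\<in>Q i. ?f j)
       = (\<Sum>j\<in>?W. (if j \<in> P i then ?f j else 0) + (if j \<in> Q i then ?f j else 0))"
      by (simp add: sum_indic[OF fW sP] sum_indic[OF fW sQ] sum.distrib)
    also have "\<dots> = (\<Sum>j\<in>?W. (if j \<in> A i then ?f j else 0) + (if j \<in> B i then ?f j else 0))"
      by (rule sum.cong[OF refl]) (rule pt)
    also have "\<dots> = (\<Sum>j\<in>A i. ?f j) + (\<Sum>j\<in>B i. ?f j)"
      by (simp add: sum_indic[OF fW sA] sum_indic[OF fW sB] sum.distrib)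
    finally show ?thesis .
  qed
  have "engagement u c Us P + engagement u c Us Q = engagement u c Us A + engagement u c Us B"
    unfolding engagement_def sum.distrib[symmetric] using per by (intro sum.cong) auto
  then show ?thesis using stP stQ by blast
qed


theorem proposition2:
  fixes u c :: "nat \<Rightarrow> real^'d"
    and nU nC K a :: nat
    and Us Cs :: "nat set"
    and c0 c1 :: nat
    and f0 f1 f01 fe :: real
  assumes "valid_types nU u" and "valid_types nC c" and "K > 0"
    and "Us \<subseteq> {1..nU}"
    and "c0 \<in> {1..nC}" and "c1 \<in> {1..nC}" and "c0 \<noteq> c1"
    and "Cs \<subseteq> {1..nC} - {c0, c1}"
    and "fval u c K a Us (Cs \<union> {c0, c1}) = Some f01"
    and "fval u c K a Us (Cs \<union> {c1}) = Some f1"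
    and "fval u c K a Us (Cs \<union> {c0}) = Some f0"
    and "fval u c K a Us Cs = Some fe"
  shows "f01 - f1 \<le> f0 - fe"
proof -
  have fU: "finite Us" using assms(4) finite_subset by blast
  have fC: "finite Cs" using assms(8) finite_subset by blast
  have c0C: "c0 \<notin> Cs" and c1C: "c1 \<notin> Cs" using assms(8) by auto
  have c01: "c0 \<noteq> c1" by (fact assms(7))
  have wnn: "\<forall>i\<in>Us. \<forall>j\<in>Cs \<union> {c0, c1}. 0 \<le> inner (u i) (c j)"
  proof (intro ballI)
    fix i j assume i: "i \<in> Us" and j: "j \<in> Cs \<union> {c0, c1}"
    have "i \<in> {1..nU}" using i assms(4) by auto
    then have "\<forall>k. u i $ k \<ge> 0" using assms(1) unfolding valid_types_def by blast
    moreover have "j \<in> {1..nC}" using j assms(5,6,8) by auto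
    then have "\<forall>k. c j $ k \<ge> 0" using assms(2) unfolding valid_types_def by blast
    ultimately show "0 \<le> inner (u i) (c j)" by (rule inner_nonneg_vec)
  qed
  have card0: "card (Cs \<union> {c0}) = Suc (card Cs)" using fC c0C by simp
  have card1: "card (Cs \<union> {c1}) = Suc (card Cs)" using fC c1C by simp
  have card01: "card (Cs \<union> {c0, c1}) = Suc (Suc (card Cs))" using fC c0C c1C c01 by simp
  obtain A where stA: "stable_with u c (if K \<le> card (Cs \<union> {c0, c1}) then K else card (Cs \<union> {c0, c1})) a 0 Us (Cs \<union> {c0, c1}) A"
    and eA: "engagement u c Us A = f01"
    using fval_props(1)[OF fU _ assms(9)] fC by auto
  obtain B where stB: "stable_with u c (if K \<le> card Cs then K else card Cs) a 0 Us Cs B"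
    and eB: "engagement u c Us B = fe"
    using fval_props(1)[OF fU fC assms(12)] by auto
  obtain W0 where stW0: "stable_with u c (if K \<le> card (Cs \<union> {c0}) then K else card (Cs \<union> {c0})) a 0 Us (Cs \<union> {c0}) W0"
    and eW0: "engagement u c Us W0 = f0"
    using fval_props(1)[OF fU _ assms(11)] fC by auto
  obtain W1 where stW1: "stable_with u c (if K \<le> card (Cs \<union> {c1}) then K else card (Cs \<union> {c1})) a 0 Us (Cs \<union> {c1}) W1"
    and eW1: "engagement u c Us W1 = f1"
    using fval_props(1)[OF fU _ assms(10)] fC by auto
  have ub0: "\<forall>R. stable_with u c (if K \<le> card (Cs \<union> {c0}) then K else card (Cs \<union> {c0})) a 0 Us (Cs \<union> {c0}) R \<longrightarrow> engagement u c Us R \<le> f0"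
    using fval_props(2)[OF fU _ assms(11)] fC by auto
  have ub1: "\<forall>R. stable_with u c (if K \<le> card (Cs \<union> {c1}) then K else card (Cs \<union> {c1})) a 0 Us (Cs \<union> {c1}) R \<longrightarrow> engagement u c Us R \<le> f1"
    using fval_props(2)[OF fU _ assms(10)] fC by auto
  show ?thesis
  proof (cases "K \<le> card Cs")
    case True
    have k01: "(if K \<le> card (Cs \<union> {c0, c1}) then K else card (Cs \<union> {c0, c1})) = K" using True card01 by simp
    have k0: "(if K \<le> card (Cs \<union> {c0}) then K else card (Cs \<union> {c0})) = K" using True card0 by simp
    have k1: "(if K \<le> card (Cs \<union> {c1}) then K else card (Cs \<union> {c1})) = K" using True card1 by simp
    have ke: "(if K \<le> card Cs then K else card Cs) = K" using True by simp
    obtain P Q where stP: "stable_with u c K a 0 Us (Cs \<union> {c0}) P" and stQ: "stable_with u c K a 0 Us (Cs \<union> {c1}) Q"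
      and eq: "engagement u c Us P + engagement u c Us Q = engagement u c Us A + engagement u c Us B"
      using main_case[OF fU fC c0C c1C c01 wnn stA[unfolded k01] stB[unfolded ke]] by blast
    have "engagement u c Us P \<le> f0" using ub0 stP k0 by simp
    moreover have "engagement u c Us Q \<le> f1" using ub1 stQ k1 by simp
    ultimately show ?thesis using eq eA eB by linarith
  next
    case False
    let ?w = "\<lambda>i j. inner (u i) (c j)"
    have ke: "(if K \<le> card Cs then K else card Cs) = card Cs" using False by simp
    have k0: "(if K \<le> card (Cs \<union> {c0}) then K else card (Cs \<union> {c0})) = card (Cs \<union> {c0})"
      using False card0 by simp
    have k1: "(if K \<le> card (Cs \<union> {c1}) then K else card (Cs \<union> {c1})) = card (Cs \<union> {c1})"
      using False card1 by simp
    have full: "R i = X" if "stable_with u c (card X) a 0 Us X R" "i \<in> Us" "finite X" for R X i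
    proof -
      have "R i \<subseteq> X" "card (R i) = card X" using that(1,2) unfolding stable_with_def by auto
      then show ?thesis using card_subset_eq[OF that(3)] by blast
    qed
    have eB': "fe = (\<Sum>i\<in>Us. \<Sum>j\<in>Cs. ?w i j)"
      using eB full[OF stB[unfolded ke] _ fC] unfolding engagement_def by simp
    have eW0': "f0 = (\<Sum>i\<in>Us. ?w i c0 + (\<Sum>j\<in>Cs. ?w i j))"
    proof -
      have "f0 = (\<Sum>i\<in>Us. \<Sum>j\<in>Cs \<union> {c0}. ?w i j)"
        using eW0 full[OF stW0[unfolded k0] _] fC unfolding engagement_def by simp
      then show ?thesis using fC c0C by simp
    qed
    have eW1': "f1 = (\<Sum>i\<in>Us. ?w i c1 + (\<Sum>j\<in>Cs. ?w i j))"
    proof -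
      have "f1 = (\<Sum>i\<in>Us. \<Sum>j\<in>Cs \<union> {c1}. ?w i j)"
        using eW1 full[OF stW1[unfolded k1] _] fC unfolding engagement_def by simp
      then show ?thesis using fC c1C by simp
    qed
    have eA': "f01 \<le> (\<Sum>i\<in>Us. ?w i c0 + ?w i c1 + (\<Sum>j\<in>Cs. ?w i j))"
    proof -
      have "f01 = (\<Sum>i\<in>Us. \<Sum>j\<in>A i. ?w i j)" using eA unfolding engagement_def by simp
      also have "\<dots> \<le> (\<Sum>i\<in>Us. \<Sum>j\<in>Cs \<union> {c0, c1}. ?w i j)"
      proof (rule sum_mono)
        fix i assume i: "i \<in> Us"
        have "A i \<subseteq> Cs \<union> {c0, c1}" using stA i unfolding stable_with_def by blast
        then show "(\<Sum>j\<in>A i. ?w i j) \<le> (\<Sum>j\<in>Cs \<union> {c0, c1}. ?w i j)"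
          using wnn i fC by (intro sum_mono2) auto
      qed
      also have "\<dots> = (\<Sum>i\<in>Us. ?w i c0 + ?w i c1 + (\<Sum>j\<in>Cs. ?w i j))"
        using fC c0C c1C c01 by (intro sum.cong) (auto simp: add.assoc)
      finally show ?thesis .
    qed
    have "(\<Sum>i\<in>Us. ?w i c0 + ?w i c1 + (\<Sum>j\<in>Cs. ?w i j)) + (\<Sum>i\<in>Us. \<Sum>j\<in>Cs. ?w i j)
        = (\<Sum>i\<in>Us. ?w i c0 + (\<Sum>j\<in>Cs. ?w i j)) + (\<Sum>i\<in>Us. ?w i c1 + (\<Sum>j\<in>Cs. ?w i j))"
      by (simp add: sum.distrib)
    then show ?thesis using eA' eB' eW0' eW1' by linarith
  qed
qed

end
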